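(* Let $L>0$, let $a$ satisfy (H_a), $h\in L^2(0,L)$, and let $\phi$ satisfy (H_φ), (H_int), (H_bdd) and $\phi(0)=+\infty$. Assume that for every $\eta\in(0,L)$ there exists $M_\eta>0$ with $h(x)\ge -M_\eta$ for a.e. $x\in[0,L-\eta]$. Then every solution $v$ of problem (C) satisfies $v(x)>0$ for all $x\in(0,L)$.
   Context: (H_a): $a\in L^\infty(0,L)$ and there are constants $0<\alpha<\beta$ with $\alpha\le a(x)\le\beta$ for a.e. $x\in(0,L)$. (H_φ): $\phi:\mathbb{R}\to\mathbb{R}\cup\{+\infty\}$ is continuous when $\mathbb{R}\cup\{+\infty\}$ carries its usual topology, and $\phi(s)<+\infty$ for every $s\neq0$. (H_int): $\int_0^\delta\phi(t)\,dt<+\infty$ and $\int_{-\delta}^0\phi(t)\,dt<+\infty$ for every $\delta\in(0,1)$. (H_bdd): for every $\delta>0$, $\phi$ is bounded (and continuous) on $\mathbb{R}\setminus(-\delta,\delta)$. Problem (C) with data $(a,h,\phi)$: find $v\in H^1(0,L)$ with $\phi(v)\in L^2(0,L)$, $a\frac{dv}{dx}=\phi(v)+h$ in $\mathcal D'(0,L)$, $v(0)=0$ (continuous representative). *)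

theory Defs
  imports "HOL-Analysis.Analysis"
begin

definition L2_on :: "real \<Rightarrow> (real \<Rightarrow> real) \<Rightarrow> bool" where
  "L2_on L f \<longleftrightarrow> set_borel_measurable lebesgue {0<..<L} f \<and>
      set_integrable lebesgue {0<..<L} (\<lambda>x. (f x)\<^sup>2)"

definition test_fun :: "real \<Rightarrow> (real \<Rightarrow> real) \<Rightarrow> bool" where
  "test_fun L \<psi> \<longleftrightarrow>
     (\<exists>D :: nat \<Rightarrow> real \<Rightarrow> real. D 0 = \<psi> \<and>
        (\<forall>n x. (D n has_real_derivative D (Suc n) x) (at x))) \<and>
     (\<exists>c d. 0 < c \<and> c \<le> d \<and> d < L \<and> (\<forall>x. x \<notin> {c..d} \<longrightarrow> \<psi> x = 0))"

definition is_weak_deriv :: "real \<Rightarrow> (real \<Rightarrow> real) \<Rightarrow> (real \<Rightarrow> real) \<Rightarrow> bool" where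
  "is_weak_deriv L v g \<longleftrightarrow>
     set_integrable lebesgue {0<..<L} v \<and> set_integrable lebesgue {0<..<L} g \<and>
     (\<forall>\<psi>. test_fun L \<psi> \<longrightarrow>
        (LINT x:{0<..<L}|lebesgue. v x * deriv \<psi> x) = - (LINT x:{0<..<L}|lebesgue. g x * \<psi> x))"

definition H1_on :: "real \<Rightarrow> (real \<Rightarrow> real) \<Rightarrow> bool" where
  "H1_on L v \<longleftrightarrow> L2_on L v \<and> (\<exists>g. L2_on L g \<and> is_weak_deriv L v g)"

definition H_a :: "real \<Rightarrow> (real \<Rightarrow> real) \<Rightarrow> bool" where
  "H_a L a \<longleftrightarrow> set_borel_measurable lebesgue {0<..<L} a \<and>
     (\<exists>\<alpha> \<beta>. 0 < \<alpha> \<and> \<alpha> < \<beta> \<and>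
        (AE x in lebesgue. x \<in> {0<..<L} \<longrightarrow> \<alpha> \<le> a x \<and> a x \<le> \<beta>))"

definition H_phi :: "(real \<Rightarrow> ereal) \<Rightarrow> bool" where
  "H_phi \<phi> \<longleftrightarrow> (\<forall>s. \<phi> s \<noteq> -\<infinity>) \<and> continuous_on UNIV \<phi> \<and> (\<forall>s. s \<noteq> 0 \<longrightarrow> \<phi> s < \<infinity>)"

definition H_int :: "(real \<Rightarrow> ereal) \<Rightarrow> bool" where
  "H_int \<phi> \<longleftrightarrow> (\<forall>\<delta>. 0 < \<delta> \<and> \<delta> < 1 \<longrightarrow>
      set_integrable lebesgue {0<..<\<delta>} (\<lambda>t. real_of_ereal (\<phi> t)) \<and>
      set_integrable lebesgue {-\<delta><..<0} (\<lambda>t. real_of_ereal (\<phi> t)))"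

definition H_bdd :: "(real \<Rightarrow> ereal) \<Rightarrow> bool" where
  "H_bdd \<phi> \<longleftrightarrow> (\<forall>\<delta>>0. (\<exists>B. \<forall>s. \<bar>s\<bar> \<ge> \<delta> \<longrightarrow> \<bar>\<phi> s\<bar> \<le> ereal B) \<and>
      continuous_on {s. \<bar>s\<bar> \<ge> \<delta>} \<phi>)"

text \<open>Problem (C) with data (a,h,phi); v is taken to be the continuous representative on [0,L].\<close>
definition solves_C :: "real \<Rightarrow> (real \<Rightarrow> real) \<Rightarrow> (real \<Rightarrow> real) \<Rightarrow> (real \<Rightarrow> ereal)
    \<Rightarrow> (real \<Rightarrow> real) \<Rightarrow> bool" where
  "solves_C L a h \<phi> v \<longleftrightarrow>
     H1_on L v \<and> continuous_on {0..L} v \<and> v 0 = 0 \<and>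
     (AE x in lebesgue. x \<in> {0<..<L} \<longrightarrow> \<phi> (v x) \<noteq> \<infinity>) \<and>
     L2_on L (\<lambda>x. real_of_ereal (\<phi> (v x))) \<and>
     (\<exists>g. L2_on L g \<and> is_weak_deriv L v g \<and>
        (\<forall>\<psi>. test_fun L \<psi> \<longrightarrow>
           (LINT x:{0<..<L}|lebesgue. a x * g x * \<psi> x) =
           (LINT x:{0<..<L}|lebesgue. (real_of_ereal (\<phi> (v x)) + h x) * \<psi> x)))"

end

theory Submission
  imports Defs "HOL-Computational_Algebra.Polynomial"
begin



fun smk :: "nat \<Rightarrow> (real \<Rightarrow> real) \<Rightarrow> bool" where
  "smk 0 f = True"
| "smk (Suc n) f = (\<exists>f'. (\<forall>x. (f has_real_derivative f' x) (at x)) \<and> smk n f')"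

lemma smk_Suc_imp: "smk (Suc n) f \<Longrightarrow> smk n f"
proof (induction n arbitrary: f)
  case 0 then show ?case by simp
next
  case (Suc n)
  then obtain f' where "\<forall>x. (f has_real_derivative f' x) (at x)" "smk (Suc n) f'" by auto
  then show ?case using Suc.IH by auto
qed

lemma smk_const: "smk n (\<lambda>x. c)"
proof (induction n arbitrary: c)
  case 0 then show ?case by simp
next
  case (Suc n) then show ?case by (auto intro!: exI[of _ "\<lambda>x. 0"])
qed

lemma smk_add: "smk n f \<Longrightarrow> smk n g \<Longrightarrow> smk n (\<lambda>x. f x + g x)"
proof (induction n arbitrary: f g)
  case 0 then show ?case by simp
next
  case (Suc n)
  then obtain f' g' where "\<forall>x. (f has_real_derivative f' x) (at x)" "smk n f'"
     "\<forall>x. (g has_real_derivative g' x) (at x)" "smk n g'" by auto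
  then show ?case using Suc.IH
    by (auto intro!: exI[of _ "\<lambda>x. f' x + g' x"] derivative_eq_intros)
qed

lemma smk_mult: "smk n f \<Longrightarrow> smk n g \<Longrightarrow> smk n (\<lambda>x. f x * g x)"
proof (induction n arbitrary: f g)
  case 0 then show ?case by simp
next
  case (Suc n)
  then obtain f' g' where d: "\<forall>x. (f has_real_derivative f' x) (at x)" "smk n f'"
     "\<forall>x. (g has_real_derivative g' x) (at x)" "smk n g'" by auto
  have "smk n f" "smk n g" using Suc.prems smk_Suc_imp by auto
  then have "smk n (\<lambda>x. f' x * g x + f x * g' x)"
    using Suc.IH d smk_add by auto
  then show ?case using d
    by (auto intro!: exI[of _ "\<lambda>x. f' x * g x + f x * g' x"] derivative_eq_intros)
qed

lemma smk_affine: "smk n f \<Longrightarrow> smk n (\<lambda>x. f (c * x + d))"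
proof (induction n arbitrary: f)
  case 0 then show ?case by simp
next
  case (Suc n)
  then obtain f' where d: "\<forall>x. (f has_real_derivative f' x) (at x)" "smk n f'" by auto
  have "smk n (\<lambda>x. c * f' (c * x + d))"
    using Suc.IH d smk_mult smk_const by auto
  moreover have "((\<lambda>x. f (c * x + d)) has_real_derivative c * f' (c * x + d)) (at x)" for x
  proof -
    have "((\<lambda>x. f (c * x + d)) has_real_derivative f' (c * x + d) * c) (at x)"
      by (rule DERIV_chain2[OF d(1)[rule_format]]) (auto intro!: derivative_eq_intros)
    then show ?thesis by (simp add: mult.commute)
  qed
  ultimately show ?case by (auto intro!: exI[of _ "\<lambda>x. c * f' (c * x + d)"])
qed

lemma smk_inverse: "smk n f \<Longrightarrow> (\<forall>x. f x \<noteq> 0) \<Longrightarrow> smk n (\<lambda>x. 1 / f x)"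
proof (induction n arbitrary: f)
  case 0 then show ?case by simp
next
  case (Suc n)
  then obtain f' where d: "\<forall>x. (f has_real_derivative f' x) (at x)" "smk n f'" by auto
  have "smk n f" using Suc.prems smk_Suc_imp by auto
  then have i: "smk n (\<lambda>x. 1 / f x)" using Suc by auto
  have "smk n (\<lambda>x. (-1) * f' x * (1 / f x) * (1 / f x))"
    by (rule smk_mult[OF smk_mult[OF smk_mult[OF smk_const d(2)] i] i])
  moreover have "((\<lambda>x. 1 / f x) has_real_derivative (-1) * f' x * (1 / f x) * (1 / f x)) (at x)" for x
    using d(1) Suc.prems(2)
    by (auto intro!: derivative_eq_intros simp: power2_eq_square field_simps)
  ultimately show ?case by (auto intro!: exI[of _ "\<lambda>x. (-1) * f' x * (1 / f x) * (1 / f x)"])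
qed

definition Gp :: "real poly \<Rightarrow> real \<Rightarrow> real" where
  "Gp p x = (if x > 0 then poly p (1/x) * exp (- (1/x)) else 0)"

lemma poly_exp_lim: "((\<lambda>y::real. y ^ k * poly (p::real poly) y * exp (- y)) \<longlongrightarrow> 0) at_top"
proof (induction p arbitrary: k)
  case 0 then show ?case by simp
next
  case (pCons a p)
  have e: "y ^ k * poly (pCons a p) y * exp (- y) = a * (y ^ k / exp y) + y ^ Suc k * poly p y * exp (- y)" for y
    by (simp add: exp_minus field_simps)
  show ?case unfolding e
    using tendsto_add[OF tendsto_mult[OF tendsto_const tendsto_power_div_exp_0[of k]] pCons.IH[of "Suc k"], of a]
    by simp
qed

lemma Gp_deriv: "(Gp p has_real_derivative Gp ([:0,0,1:] * (p - pderiv p)) x) (at x)"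
proof (cases "x = 0")
  case True
  have r: "((\<lambda>h. (Gp p (0 + h) - Gp p 0) / h) \<longlongrightarrow> 0) (at_right 0)"
  proof -
    have "((\<lambda>y. y ^ 1 * poly p y * exp (- y)) \<longlongrightarrow> 0) at_top" by (rule poly_exp_lim)
    then have "((\<lambda>h. (inverse h) ^ 1 * poly p (inverse h) * exp (- inverse h)) \<longlongrightarrow> 0) (at_right 0)"
      using filterlim_compose[OF _ filterlim_inverse_at_top_right] by blast
    then show ?thesis
      apply (rule Lim_transform_eventually)
      by (auto simp: eventually_at_right_less Gp_def field_simps intro!: eventually_mono[OF eventually_at_right_less[of 0]])
  qed
  have l: "((\<lambda>h. (Gp p (0 + h) - Gp p 0) / h) \<longlongrightarrow> 0) (at_left 0)"
    apply (rule Lim_transform_eventually[OF tendsto_const[of 0]])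
    by (auto simp: Gp_def intro!: eventually_mono[OF eventually_at_left_real[of "-1" 0]])
  have "((\<lambda>h. (Gp p (0 + h) - Gp p 0) / h) \<longlongrightarrow> 0) (at 0)"
    using l r by (simp add: filterlim_split_at)
  then have "(Gp p has_real_derivative 0) (at 0)" by (simp add: DERIV_def)
  then show ?thesis using True by (simp add: Gp_def)
next
  case False
  show ?thesis
  proof (cases "x > 0")
    case True
    let ?q = "[:0,0,1:] * (p - pderiv p)"
    have "((\<lambda>x. poly p (1/x) * exp (- (1/x))) has_real_derivative Gp ?q x) (at x)"
      using True
      apply (auto intro!: derivative_eq_intros DERIV_chain2[OF poly_DERIV] simp: Gp_def)
      by (simp add: field_simps power2_eq_square)
    then show ?thesis
      apply (rule has_field_derivative_transform_within_open[where S="{0<..}"])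
      using True by (auto simp: Gp_def)
  next
    case False
    with \<open>x \<noteq> 0\<close> have "x < 0" by auto
    have "((\<lambda>x. 0) has_real_derivative Gp ([:0,0,1:] * (p - pderiv p)) x) (at x)"
      using \<open>x < 0\<close> by (auto simp: Gp_def)
    then show ?thesis
      apply (rule has_field_derivative_transform_within_open[where S="{..<0}"])
      using \<open>x < 0\<close> by (auto simp: Gp_def)
  qed
qed

lemma smk_Gp: "smk n (Gp p)"
proof (induction n arbitrary: p)
  case 0 then show ?case by simp
next
  case (Suc n) then show ?case using Gp_deriv by auto
qed


lemma smooth_D:
  assumes "\<forall>n. smk n f"
  shows "\<exists>D. D 0 = f \<and> (\<forall>n x. (D n has_real_derivative D (Suc n) x) (at x))"
proof -
  have a: "\<forall>m. smk m ((deriv ^^ n) f)" for n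
  proof (induction n)
    case 0 then show ?case using assms by simp
  next
    case (Suc n)
    show ?case
    proof
      fix m
      obtain f' where d: "\<forall>x. ((deriv ^^ n) f has_real_derivative f' x) (at x)" "smk m f'"
        using Suc[rule_format, of "Suc m"] by auto
      have "deriv ((deriv ^^ n) f) = f'" using d(1) by (auto intro!: DERIV_imp_deriv)
      then show "smk m ((deriv ^^ Suc n) f)" using d(2) by simp
    qed
  qed
  have "((deriv ^^ n) f has_real_derivative (deriv ^^ Suc n) f x) (at x)" for n x
  proof -
    obtain f' where d: "\<forall>x. ((deriv ^^ n) f has_real_derivative f' x) (at x)"
      using a[of n, rule_format, of 1] by auto
    have "deriv ((deriv ^^ n) f) = f'" using d(1) by (auto intro!: DERIV_imp_deriv)
    then show ?thesis using d by simp
  qed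
  then show ?thesis by (intro exI[of _ "\<lambda>n. (deriv ^^ n) f"]) simp
qed

definition f0 :: "real \<Rightarrow> real" where "f0 = Gp [:1:]"

lemma f0_eq: "f0 x = (if x > 0 then exp (- (1/x)) else 0)"
  by (simp add: f0_def Gp_def)

lemma f0_nonneg: "f0 x \<ge> 0" by (simp add: f0_eq)
lemma f0_pos: "x > 0 \<Longrightarrow> f0 x > 0" by (simp add: f0_eq)
lemma f0_mono: "x \<le> y \<Longrightarrow> f0 x \<le> f0 y"
proof -
  assume xy: "x \<le> y"
  show ?thesis
  proof (cases "x > 0")
    case True
    then have "1/y \<le> 1/x" using xy by (simp add: frac_le)
    then show ?thesis using True xy by (simp add: f0_eq)
  next
    case False then show ?thesis by (simp add: f0_eq)
  qed
qed

definition S :: "real \<Rightarrow> real" where "S t = f0 t / (f0 t + f0 (1 - t))"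

lemma S_den_pos: "f0 t + f0 (1 - t) > 0"
proof (cases "t > 0")
  case True then show ?thesis using f0_pos[of t] f0_nonneg[of "1-t"] by auto
next
  case False then show ?thesis using f0_pos[of "1-t"] f0_nonneg[of t] by auto
qed

lemma S_smooth: "smk n S"
proof -
  have g: "smk n (\<lambda>t. f0 ((-1) * t + 1))" unfolding f0_def by (rule smk_affine[OF smk_Gp])
  have "smk n (\<lambda>t. f0 t * (1 / (f0 t + f0 ((-1) * t + 1))))"
    apply (rule smk_mult)
     apply (simp add: f0_def smk_Gp)
    apply (rule smk_inverse[OF smk_add[OF _ g]])
     apply (simp add: f0_def smk_Gp)
    using S_den_pos by (metis add.commute mult_1 mult_minus_left order_less_irrefl uminus_add_conv_diff)
  then show ?thesis unfolding S_def by (simp add: add_ac)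
qed

lemma S_0: "t \<le> 0 \<Longrightarrow> S t = 0" by (simp add: S_def f0_eq)
lemma S_1: "t \<ge> 1 \<Longrightarrow> S t = 1"
  using S_den_pos[of t] by (simp add: S_def f0_eq)
lemma S_nonneg: "S t \<ge> 0" using S_den_pos[of t] f0_nonneg[of t] by (simp add: S_def)
lemma S_le1: "S t \<le> 1" using S_den_pos[of t] f0_nonneg[of "1-t"] by (simp add: S_def divide_simps)
lemma S_mono: "t \<le> s \<Longrightarrow> S t \<le> S s"
proof -
  assume "t \<le> s"
  then have "f0 t * f0 (1 - s) \<le> f0 s * f0 (1 - t)"
    by (intro mult_mono f0_mono f0_nonneg) auto
  then have "f0 t * (f0 s + f0 (1 - s)) \<le> f0 s * (f0 t + f0 (1 - t))"
    by (simp add: algebra_simps)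
  then show ?thesis using S_den_pos[of t] S_den_pos[of s]
    unfolding S_def by (simp add: frac_le_eq divide_le_eq_1 le_divide_eq divide_le_eq)
qed

definition Sd :: "real \<Rightarrow> real" where "Sd = deriv S"

lemma S_deriv: "(S has_real_derivative Sd t) (at t)"
proof -
  obtain f' where "\<forall>x. (S has_real_derivative f' x) (at x)" using S_smooth[of 1] by auto
  then show ?thesis unfolding Sd_def using DERIV_imp_deriv by metis
qed

lemma Sd_cont: "isCont Sd t"
proof -
  obtain f' where d: "\<forall>x. (S has_real_derivative f' x) (at x)" "smk 1 f'" using S_smooth[of 2]
    by (auto simp: numeral_2_eq_2)
  have "Sd = f'" unfolding Sd_def using d(1) by (auto intro!: DERIV_imp_deriv)
  then show ?thesis using d(2) by (auto intro: DERIV_isCont)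
qed

lemma Sd_nonneg: "Sd t \<ge> 0"
proof -
  have "((\<lambda>h. (S (t + h) - S t) / h) \<longlongrightarrow> Sd t) (at 0)" using S_deriv[of t] by (simp add: DERIV_def)
  then have "((\<lambda>h. (S (t + h) - S t) / h) \<longlongrightarrow> Sd t) (at_right 0)" by (simp add: filterlim_at_split)
  moreover have "\<forall>\<^sub>F h in at_right 0. 0 \<le> (S (t + h) - S t) / h"
    by (intro eventually_mono[OF eventually_at_right_less[of 0]]) (auto intro!: divide_nonneg_pos S_mono)
  ultimately show ?thesis by (intro tendsto_lowerbound) auto
qed

lemma Sd_zero: "t \<le> 0 \<or> t \<ge> 1 \<Longrightarrow> Sd t = 0"
proof (elim disjE)
  assume "t \<le> 0"
  show ?thesis
    by (rule DERIV_local_min[OF S_deriv, of 1]) (auto simp: S_0 \<open>t\<le>0\<close> S_nonneg)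
next
  assume "t \<ge> 1"
  show ?thesis
    by (rule DERIV_local_max[OF S_deriv, of 1]) (auto simp: S_1 \<open>t\<ge>1\<close> S_le1)
qed

lemma S_cont: "isCont S t" using S_deriv DERIV_isCont by blast

definition plat :: "real \<Rightarrow> real \<Rightarrow> real \<Rightarrow> real \<Rightarrow> real" where
  "plat x y e t = S ((t - x) / e) * S ((y - t) / e)"

lemma plat_smooth: "e > 0 \<Longrightarrow> smk n (plat x y e)"
proof -
  assume e: "e > 0"
  have "smk n (\<lambda>t. S ((1/e) * t + (- x / e)) * S ((-1/e) * t + y / e))"
    by (intro smk_mult smk_affine S_smooth)
  moreover have "(\<lambda>t. S ((1/e) * t + (- x / e)) * S ((-1/e) * t + y / e)) = plat x y e"
    using e by (auto simp: plat_def diff_divide_distrib)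
  ultimately show ?thesis by simp
qed

lemma plat_zero: "e > 0 \<Longrightarrow> t \<le> x \<or> t \<ge> y \<Longrightarrow> plat x y e t = 0"
  by (auto simp: plat_def S_0 divide_nonpos_pos)

lemma plat_one: "e > 0 \<Longrightarrow> x + e \<le> t \<Longrightarrow> t \<le> y - e \<Longrightarrow> plat x y e t = 1"
  by (auto simp: plat_def S_1)

lemma plat_bounds: "0 \<le> plat x y e t" "plat x y e t \<le> 1"
  unfolding plat_def using S_nonneg S_le1 by (auto intro: mult_le_one)

lemma plat_has_deriv: "e > 0 \<Longrightarrow> (plat x y e has_real_derivative
   Sd ((t - x) / e) / e * S ((y - t) / e) - S ((t - x) / e) * Sd ((y - t) / e) / e) (at t)"
proof -
  assume e: "e > 0"
  have d1: "((\<lambda>t. S ((t - x) / e)) has_real_derivative Sd ((t - x) / e) * (1 / e)) (at t)"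
    by (rule DERIV_chain2[OF S_deriv]) (use e in \<open>auto intro!: derivative_eq_intros\<close>)
  have d2: "((\<lambda>t. S ((y - t) / e)) has_real_derivative Sd ((y - t) / e) * (- 1 / e)) (at t)"
    by (rule DERIV_chain2[OF S_deriv]) (use e in \<open>auto intro!: derivative_eq_intros\<close>)
  have "((\<lambda>t. S ((t - x) / e) * S ((y - t) / e)) has_real_derivative
     Sd ((t - x) / e) * (1 / e) * S ((y - t) / e) + Sd ((y - t) / e) * (- 1 / e) * S ((t - x) / e)) (at t)"
    by (rule DERIV_mult[OF d1 d2])
  then show ?thesis unfolding plat_def by (simp add: algebra_simps)
qed

lemma plat_deriv: "e > 0 \<Longrightarrow> deriv (plat x y e) t =
   Sd ((t - x) / e) / e * S ((y - t) / e) - S ((t - x) / e) * Sd ((y - t) / e) / e"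
  using plat_has_deriv DERIV_imp_deriv by blast

lemma plat_cont: "e > 0 \<Longrightarrow> continuous_on UNIV (plat x y e)"
  by (intro continuous_at_imp_continuous_on ballI DERIV_isCont[OF plat_has_deriv])

lemma plat_test: "0 < x \<Longrightarrow> x < y \<Longrightarrow> y < L \<Longrightarrow> e > 0 \<Longrightarrow> test_fun L (plat x y e)"
proof -
  assume a: "0 < x" "x < y" "y < L" "e > 0"
  have "\<exists>D. D 0 = plat x y e \<and> (\<forall>n x. (D n has_real_derivative D (Suc n) x) (at x))"
    by (rule smooth_D) (use plat_smooth a(4) in blast)
  moreover have "\<forall>t. t \<notin> {x..y} \<longrightarrow> plat x y e t = 0"
  proof (intro allI impI)
    fix t assume "t \<notin> {x..y}"
    then have "t \<le> x \<or> t \<ge> y" by auto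
    then show "plat x y e t = 0" by (rule plat_zero[OF a(4)])
  qed
  moreover have "\<exists>c d. 0 < c \<and> c \<le> d \<and> d < L \<and> (\<forall>t. t \<notin> {c..d} \<longrightarrow> plat x y e t = 0)"
    using a calculation(2) by (intro exI[of _ x] exI[of _ y]) auto
  ultimately show ?thesis unfolding test_fun_def by blast
qed




lemma cont_meas_leb: "continuous_on UNIV f \<Longrightarrow> (f::real\<Rightarrow>real) \<in> borel_measurable lebesgue"
  by (intro measurable_completion) (simp add: borel_measurable_continuous_onI)

lemma plat_meas: "e > 0 \<Longrightarrow> plat x y e \<in> borel_measurable lebesgue"
  using plat_cont cont_meas_leb by blast

lemma fund_step1:
  fixes G :: "real \<Rightarrow> real"
  assumes L: "0 < L" and Gint: "integrable lebesgue G"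
    and Gsupp: "\<And>t. t \<notin> {0<..<L} \<Longrightarrow> G t = 0"
    and zero: "\<And>x y e. 0 < x \<Longrightarrow> x < y \<Longrightarrow> y < L \<Longrightarrow> e > 0 \<Longrightarrow>
         (LINT t|lebesgue. plat x y e t * G t) = 0"
  shows "(LINT t|lebesgue. indicator {c<..} t * G t) = 0"
proof (cases "c \<ge> L")
  case True
  then have "(\<lambda>t. indicator {c<..} t * G t) = (\<lambda>t. 0)" using Gsupp by (auto simp: indicator_def)
  then show ?thesis by simp
next
  case False
  define c' where "c' = max c 0"
  have c'L: "c' < L" "0 \<le> c'" using False L by (auto simp: c'_def)
  define d where "d n = (L - c') / (real n + 4)" for n
  have dpos: "d n > 0" for n using c'L by (simp add: d_def)
  have d4: "4 * d n \<le> L - c'" for n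
  proof -
    have "c' * real n \<le> L * real n" using c'L by (intro mult_right_mono) auto
    then show ?thesis using c'L by (simp add: d_def field_simps)
  qed
  have d0: "d \<longlonglongrightarrow> 0"
  proof -
    have "filterlim (\<lambda>n. real n + 4) at_top sequentially"
      by (subst add.commute, rule filterlim_tendsto_add_at_top[OF tendsto_const filterlim_real_sequentially])
    then show ?thesis unfolding d_def by (intro tendsto_divide_0[OF tendsto_const] filterlim_at_top_imp_at_infinity)
  qed
  define s where "s n t = plat (c' + d n) (L - d n) (d n) t * G t" for n t
  have Gm: "G \<in> borel_measurable lebesgue" using Gint by auto
  have lim: "AE t in lebesgue. (\<lambda>n. s n t) \<longlonglongrightarrow> indicator {c<..} t * G t"
  proof (intro AE_I2)
    fix t
    show "(\<lambda>n. s n t) \<longlonglongrightarrow> indicator {c<..} t * G t"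
    proof (cases "t \<in> {0<..<L}")
      case False
      then show ?thesis using Gsupp[of t] by (simp add: s_def)
    next
      case True
      show ?thesis
      proof (cases "t > c")
        case tc: True
        then have "t > c'" using True by (auto simp: c'_def)
        define m where "m = min (t - c') (L - t)"
        have "m > 0" using True \<open>t > c'\<close> by (auto simp: m_def)
        then have "\<forall>\<^sub>F n in sequentially. d n < m / 2" using order_tendstoD(2)[OF d0, of "m/2"] by auto
        then have "\<forall>\<^sub>F n in sequentially. s n t = indicator {c<..} t * G t"
        proof (rule eventually_mono)
          fix n assume "d n < m / 2"
          then have "plat (c' + d n) (L - d n) (d n) t = 1"
            by (intro plat_one dpos) (auto simp: m_def)
          then show "s n t = indicator {c<..} t * G t" using tc by (simp add: s_def)
        qed
        then show ?thesis by (rule tendsto_eventually)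
      next
        case False
        then have "t \<le> c' + d n" for n using dpos[of n] by (auto simp: c'_def)
        then have "s n t = 0" for n by (simp add: s_def plat_zero dpos)
        then show ?thesis using False by simp
      qed
    qed
  qed
  have conv: "(\<lambda>n. LINT t|lebesgue. s n t) \<longlonglongrightarrow> (LINT t|lebesgue. indicator {c<..} t * G t)"
  proof (rule integral_dominated_convergence[where w="\<lambda>t. norm (G t)"])
    show "(\<lambda>t. indicator {c<..} t * G t) \<in> borel_measurable lebesgue"
      by (rule borel_measurable_times[OF borel_measurable_indicator Gm]) (intro sets_completionI_sets, simp)
    show "s n \<in> borel_measurable lebesgue" for n
      unfolding s_def by (rule borel_measurable_times[OF plat_meas[OF dpos] Gm])
    show "integrable lebesgue (\<lambda>t. norm (G t))" using Gint by auto
    show "AE t in lebesgue. (\<lambda>n. s n t) \<longlonglongrightarrow> indicator {c<..} t * G t" by (rule lim)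
    show "AE t in lebesgue. norm (s n t) \<le> norm (G t)" for n
      using plat_bounds by (auto simp: s_def abs_mult intro!: mult_left_le_one_le)
  qed
  have "(LINT t|lebesgue. s n t) = 0" for n
    unfolding s_def
    by (rule zero) (use dpos[of n] d4[of n] c'L in auto)
  then have "(\<lambda>n. LINT t|lebesgue. s n t) \<longlonglongrightarrow> 0" by simp
  then show ?thesis using conv LIMSEQ_unique by metis
qed




lemma sigma_Ioi_eq: "sigma_sets UNIV (range greaterThan) = sets (borel::real measure)"
  unfolding borel_Ioi by (simp add: sets_measure_of)

lemma sigma_Ioi_leb: "A \<in> sigma_sets UNIV (range greaterThan) \<Longrightarrow> (A::real set) \<in> sets lebesgue"
  unfolding sigma_Ioi_eq by (intro sets_completionI_sets) (simp add: sets_lborel)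

lemma fund_borel:
  fixes G :: "real \<Rightarrow> real"
  assumes Gint: "integrable lebesgue G"
    and step1: "\<And>c. (LINT t|lebesgue. indicator {c<..} t * G t) = 0"
    and Gall: "(LINT t|lebesgue. G t) = 0"
    and A: "A \<in> sets borel"
  shows "(LINT t|lebesgue. indicator A t * G t) = 0"
proof -
  have Ist: "Int_stable (range greaterThan :: real set set)"
  proof -
    have "{a<..} \<inter> {b<..} = {max a b<..}" for a b :: real by auto
    then show ?thesis unfolding Int_stable_def by auto
  qed
  have Asig: "A \<in> sigma_sets UNIV (range greaterThan)" using A sigma_Ioi_eq by simp
  have cl: "range greaterThan \<subseteq> Pow (UNIV::real set)" by simp
  from Ist cl Asig show ?thesis
  proof (induct rule: sigma_sets_induct_disjoint)
    case (basic A) then show ?case using step1 by auto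
  next
    case empty then show ?case by simp
  next
    case (compl A)
    have Al: "A \<in> sets lebesgue" using compl(1) by (rule sigma_Ioi_leb)
    have "(LINT t|lebesgue. indicator (UNIV - A) t * G t) =
          (LINT t|lebesgue. G t - indicator A t * G t)"
      by (intro Bochner_Integration.integral_cong) (auto simp: indicator_def)
    also have "\<dots> = (LINT t|lebesgue. G t) - (LINT t|lebesgue. indicator A t * G t)"
      using integrable_mult_indicator[OF Al Gint] Gint by (intro Bochner_Integration.integral_diff) auto
    finally show ?case using compl(2) Gall by simp
  next
    case (union A)
    have Al: "A i \<in> sets lebesgue" for i
      using union(2) by (intro sigma_Ioi_leb) auto
    have Ul: "(\<Union>i. A i) \<in> sets lebesgue" using Al by auto
    have "(LINT x:(\<Union>i. A i)|lebesgue. G x) = (\<Sum>i. (LINT x:(A i)|lebesgue. G x))"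
    proof (rule lebesgue_integral_countable_add)
      show "A i \<inter> A j = {}" if "i \<noteq> j" for i j using union(1) that by (auto simp: disjoint_family_on_def)
      show "set_integrable lebesgue (\<Union>i. A i) G"
        unfolding set_integrable_def by (rule integrable_mult_indicator[OF Ul Gint])
      show "A i \<in> sets lebesgue" for i by (rule Al)
    qed
    then show ?case using union(3) by (simp add: set_lebesgue_integral_def)
  qed
qed

lemma fund_step2:
  fixes G :: "real \<Rightarrow> real"
  assumes Gint: "integrable lebesgue G"
    and step1: "\<And>c. (LINT t|lebesgue. indicator {c<..} t * G t) = 0"
    and Gall: "(LINT t|lebesgue. G t) = 0"
  shows "AE t in lebesgue. G t = 0"
proof (rule density_unique_real[OF Gint integrable_zero])
  fix S :: "real set" assume Sl: "S \<in> sets lebesgue"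
  then obtain B N N' where BN: "S = B \<union> N" "N \<subseteq> N'" "N' \<in> null_sets lborel" "B \<in> sets lborel"
    by (rule sets_completionE)
  have Bl: "B \<in> sets lebesgue" using BN(4) by (rule sets_completionI_sets)
  have "AE t in lebesgue. t \<notin> N'" using BN(3) by (intro AE_not_in null_sets_completionI)
  then have "AE t in lebesgue. indicator S t * G t = indicator B t * G t"
  proof (rule AE_mp, intro AE_I2 impI)
    fix t assume "t \<notin> N'"
    then show "indicator S t * G t = indicator B t * G t" using BN(1,2) by (auto simp: indicator_def)
  qed
  then have "(LINT t|lebesgue. indicator S t * G t) = (LINT t|lebesgue. indicator B t * G t)"
    by (rule integral_cong_AE[rotated 2])
       (auto intro!: borel_measurable_times borel_measurable_indicator Sl Bl borel_measurable_integrable[OF Gint])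
  also have "\<dots> = 0"
    by (rule fund_borel[OF Gint step1 Gall]) (use BN(4) in \<open>simp add: sets_lborel\<close>)
  finally show "set_lebesgue_integral lebesgue S G = set_lebesgue_integral lebesgue S (\<lambda>x. 0)"
    by (simp add: set_lebesgue_integral_def)
qed




lemma S_aff1_deriv: "e > 0 \<Longrightarrow> ((\<lambda>t. S ((t - x) / e)) has_real_derivative Sd ((t - x) / e) / e) (at t)"
proof -
  assume e: "e > 0"
  have "((\<lambda>t. S ((t - x) / e)) has_real_derivative Sd ((t - x) / e) * (1 / e)) (at t)"
    by (rule DERIV_chain2[OF S_deriv]) (use e in \<open>auto intro!: derivative_eq_intros\<close>)
  then show ?thesis by simp
qed

lemma S_aff2_deriv: "e > 0 \<Longrightarrow> ((\<lambda>t. - S ((y - t) / e)) has_real_derivative Sd ((y - t) / e) / e) (at t)"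
proof -
  assume e: "e > 0"
  have "((\<lambda>t. S ((y - t) / e)) has_real_derivative Sd ((y - t) / e) * (- 1 / e)) (at t)"
    by (rule DERIV_chain2[OF S_deriv]) (use e in \<open>auto intro!: derivative_eq_intros\<close>)
  then show ?thesis using DERIV_minus by fastforce
qed

lemma k1_cont: "e > 0 \<Longrightarrow> continuous_on A (\<lambda>t. Sd ((t - x) / e) / e)"
  by (intro continuous_intros continuous_on_compose2[OF continuous_at_imp_continuous_on[of UNIV Sd]])
     (auto intro: Sd_cont)

lemma k2_cont: "e > 0 \<Longrightarrow> continuous_on A (\<lambda>t. Sd ((y - t) / e) / e)"
  by (intro continuous_intros continuous_on_compose2[OF continuous_at_imp_continuous_on[of UNIV Sd]])
     (auto intro: Sd_cont)

lemma S_cont_on: "continuous_on A (\<lambda>t. S (f t))" if "continuous_on A f"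
  using continuous_on_compose2[OF continuous_at_imp_continuous_on[of UNIV S] that] S_cont by auto

lemma k1_int: "e > 0 \<Longrightarrow> ((\<lambda>t. Sd ((t - x) / e) / e) has_integral 1) {x..x+e}"
proof -
  assume e: "e > 0"
  have "((\<lambda>t. Sd ((t - x) / e) / e) has_integral (S ((x + e - x) / e) - S ((x - x) / e))) {x..x+e}"
    apply (rule fundamental_theorem_of_calculus)
    using e apply simp
    using S_aff1_deriv[OF e] by (auto simp: has_real_derivative_iff_has_vector_derivative[symmetric]
        intro: has_field_derivative_at_within)
  then show ?thesis using e by (simp add: S_0 S_1)
qed

lemma k2_int: "e > 0 \<Longrightarrow> ((\<lambda>t. Sd ((y - t) / e) / e) has_integral 1) {y-e..y}"
proof -
  assume e: "e > 0"
  have "((\<lambda>t. Sd ((y - t) / e) / e) has_integral ((- S ((y - y) / e)) - (- S ((y - (y - e)) / e)))) {y-e..y}"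
    apply (rule fundamental_theorem_of_calculus)
    using e apply simp
    using S_aff2_deriv[OF e] by (auto simp: has_real_derivative_iff_has_vector_derivative[symmetric]
        intro: has_field_derivative_at_within)
  then show ?thesis using e by (simp add: S_0 S_1)
qed

lemma bump_est:
  fixes v :: "real \<Rightarrow> real"
  assumes vc: "continuous_on {a..b} v" and e: "e > 0" and ab: "b - a = e"
    and k: "continuous_on {a..b} k" "\<And>t. k t \<ge> 0" "(k has_integral 1) {a..b}"
    and r: "\<And>t. t \<in> {a..b} \<Longrightarrow> \<bar>v t - v c\<bar> \<le> r"
  shows "\<bar>integral {a..b} (\<lambda>t. v t * k t) - v c\<bar> \<le> r"
proof -
  have i1: "(\<lambda>t. v t * k t) integrable_on {a..b}"
    by (intro integrable_continuous_interval continuous_intros vc k)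
  have "integral {a..b} (\<lambda>t. v t * k t) - v c = integral {a..b} (\<lambda>t. v t * k t) - integral {a..b} (\<lambda>t. v c * k t)"
    using k(3) by (simp add: integral_unique)
  also have "\<dots> = integral {a..b} (\<lambda>t. (v t - v c) * k t)"
  proof -
    have i2: "(\<lambda>t. v c * k t) integrable_on {a..b}" by (intro integrable_continuous_interval continuous_intros k(1))
    show ?thesis by (subst integral_diff[OF i1 i2, symmetric]) (simp add: algebra_simps)
  qed
  finally have eq: "integral {a..b} (\<lambda>t. v t * k t) - v c = integral {a..b} (\<lambda>t. (v t - v c) * k t)" .
  have "norm (integral {a..b} (\<lambda>t. (v t - v c) * k t)) \<le> integral {a..b} (\<lambda>t. r * k t)"
  proof (rule Henstock_Kurzweil_Integration.integral_norm_bound_integral)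
    show "(\<lambda>t. (v t - v c) * k t) integrable_on {a..b}"
      by (intro integrable_continuous_interval continuous_intros vc k)
    show "(\<lambda>t. r * k t) integrable_on {a..b}"
      by (intro integrable_continuous_interval continuous_intros vc k)
    fix t assume "t \<in> {a..b}"
    then show "norm ((v t - v c) * k t) \<le> r * k t"
      using r k(2)[of t] by (auto simp: abs_mult intro: mult_right_mono)
  qed
  also have "\<dots> = r" using k(3) by (simp add: integral_unique)
  finally show ?thesis using eq by simp
qed

lemma plat_lhs_hasint:
  fixes v :: "real \<Rightarrow> real"
  assumes vc: "continuous_on {x..y} v" and e: "e > 0" and xy: "2 * e \<le> y - x"
  shows "((\<lambda>t. v t * deriv (plat x y e) t) has_integral
     (integral {x..x+e} (\<lambda>t. v t * (Sd ((t - x) / e) / e)) - integral {y-e..y} (\<lambda>t. v t * (Sd ((y - t) / e) / e)))) {x..y}"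
proof -
  let ?I1 = "integral {x..x+e} (\<lambda>t. v t * (Sd ((t - x) / e) / e))"
  let ?I2 = "integral {y-e..y} (\<lambda>t. v t * (Sd ((y - t) / e) / e))"
  have h1: "((\<lambda>t. v t * deriv (plat x y e) t) has_integral ?I1) {x..x+e}"
  proof -
    have "((\<lambda>t. v t * (Sd ((t - x) / e) / e)) has_integral ?I1) {x..x+e}"
      by (intro integrable_integral integrable_continuous_interval continuous_intros k1_cont
          continuous_on_subset[OF vc]) (use xy e in auto)
    then show ?thesis
    proof (rule has_integral_eq[rotated])
      fix t assume t: "t \<in> {x..x+e}"
      then have "(y - t) / e \<ge> 1" using xy e by (auto simp: field_simps)
      then show "v t * (Sd ((t - x) / e) / e) = v t * deriv (plat x y e) t"
        using e by (simp add: plat_deriv S_1 Sd_zero)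
    qed
  qed
  have h2: "((\<lambda>t. v t * deriv (plat x y e) t) has_integral 0) {x+e..y-e}"
  proof -
    have "((\<lambda>t. 0::real) has_integral 0) {x+e..y-e}" by simp
    then show ?thesis
    proof (rule has_integral_eq[rotated])
      fix t assume t: "t \<in> {x+e..y-e}"
      then have "(y - t) / e \<ge> 1" "(t - x) / e \<ge> 1" using xy e by (auto simp: field_simps)
      then show "0 = v t * deriv (plat x y e) t"
        using e by (simp add: plat_deriv S_1 Sd_zero)
    qed
  qed
  have h3: "((\<lambda>t. v t * deriv (plat x y e) t) has_integral - ?I2) {y-e..y}"
  proof -
    have "((\<lambda>t. v t * (Sd ((y - t) / e) / e)) has_integral ?I2) {y-e..y}"
      by (intro integrable_integral integrable_continuous_interval continuous_intros k2_cont
          continuous_on_subset[OF vc]) (use xy e in auto)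
    then have "((\<lambda>t. - (v t * (Sd ((y - t) / e) / e))) has_integral - ?I2) {y-e..y}"
      by (rule has_integral_neg)
    then show ?thesis
    proof (rule has_integral_eq[rotated])
      fix t assume t: "t \<in> {y-e..y}"
      then have "(t - x) / e \<ge> 1" using xy e by (auto simp: field_simps)
      then show "- (v t * (Sd ((y - t) / e) / e)) = v t * deriv (plat x y e) t"
        using e by (simp add: plat_deriv S_1 Sd_zero)
    qed
  qed
  have "((\<lambda>t. v t * deriv (plat x y e) t) has_integral (?I1 + 0)) {x..y-e}"
    by (intro has_integral_combine[OF _ _ h1 h2]) (use xy e in auto)
  then have "((\<lambda>t. v t * deriv (plat x y e) t) has_integral (?I1 + 0 + - ?I2)) {x..y}"
    by (intro has_integral_combine[OF _ _ _ h3]) (use xy e in auto)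
  then show ?thesis by simp
qed




lemma fundamental:
  fixes F :: "real \<Rightarrow> real"
  assumes L: "0 < L" and int: "set_integrable lebesgue {0<..<L} F"
    and zero: "\<And>x y e. 0 < x \<Longrightarrow> x < y \<Longrightarrow> y < L \<Longrightarrow> e > 0 \<Longrightarrow>
        (LINT t:{0<..<L}|lebesgue. F t * plat x y e t) = 0"
  shows "AE t in lebesgue. t \<in> {0<..<L} \<longrightarrow> F t = 0"
proof -
  define G where "G t = indicator {0<..<L} t * F t" for t
  have Gint: "integrable lebesgue G" using int by (simp add: set_integrable_def G_def[abs_def])
  have Gsupp: "\<And>t. t \<notin> {0<..<L} \<Longrightarrow> G t = 0" by (simp add: G_def)
  have z: "(LINT t|lebesgue. plat x y e t * G t) = 0" if "0 < x" "x < y" "y < L" "e > 0" for x y e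
  proof -
    have "(LINT t|lebesgue. plat x y e t * G t) = (LINT t:{0<..<L}|lebesgue. F t * plat x y e t)"
      unfolding set_lebesgue_integral_def G_def by (intro Bochner_Integration.integral_cong) auto
    then show ?thesis using zero that by simp
  qed
  have s1: "(LINT t|lebesgue. indicator {c<..} t * G t) = 0" for c
    by (rule fund_step1[OF L Gint Gsupp z])
  have "(LINT t|lebesgue. G t) = (LINT t|lebesgue. indicator {0<..} t * G t)"
    by (intro Bochner_Integration.integral_cong) (auto simp: G_def indicator_def)
  then have "(LINT t|lebesgue. G t) = 0" using s1 by simp
  then have "AE t in lebesgue. G t = 0" by (rule fund_step2[OF Gint s1])
  then show ?thesis by eventually_elim (auto simp: G_def)
qed

lemma abs_le_1_sq: "\<bar>z::real\<bar> \<le> 1 + z\<^sup>2"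
proof (cases "\<bar>z\<bar> \<le> 1")
  case True then show ?thesis by (simp add: add_increasing2)
next
  case False
  then have "\<bar>z\<bar> * 1 \<le> \<bar>z\<bar> * \<bar>z\<bar>" by (intro mult_left_mono) auto
  then show ?thesis by (simp add: power2_eq_square abs_mult_self_eq)
qed

lemma int_Ioo: "integrable lebesgue (indicat_real {0<..<(L::real)})"
  using lmeasurable_interval(2)[of 0 L] by (intro integrable_real_indicator) (auto simp: fmeasurable_def)

lemma L2_L1:
  assumes "L2_on L f"
  shows "set_integrable lebesgue {0<..<L} f"
proof -
  have m: "(\<lambda>x. indicator {0<..<L} x *\<^sub>R f x) \<in> borel_measurable lebesgue"
    using assms by (simp add: L2_on_def set_borel_measurable_def)
  have i2: "integrable lebesgue (\<lambda>x. indicator {0<..<L} x *\<^sub>R (f x)\<^sup>2)"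
    using assms by (simp add: L2_on_def set_integrable_def)
  have "integrable lebesgue (\<lambda>x. indicator {0<..<L} x + indicator {0<..<L} x *\<^sub>R (f x)\<^sup>2)"
    using int_Ioo i2 by (rule Bochner_Integration.integrable_add)
  then show ?thesis unfolding set_integrable_def
  proof (rule Bochner_Integration.integrable_bound[OF _ m])
    show "AE x in lebesgue. norm (indicator {0<..<L} x *\<^sub>R f x) \<le>
        norm (indicator {0<..<L} x + indicator {0<..<L} x *\<^sub>R (f x)\<^sup>2)"
      using abs_le_1_sq by (intro AE_I2) (auto simp: indicator_def)
  qed
qed

lemma set_int_mult_bdd:
  fixes F k :: "real \<Rightarrow> real"
  assumes F: "set_integrable lebesgue A F" and km: "k \<in> borel_measurable lebesgue"
    and kb: "\<And>t. \<bar>k t\<bar> \<le> B"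
  shows "set_integrable lebesgue A (\<lambda>t. F t * k t)"
proof -
  have Fm: "(\<lambda>t. indicator A t *\<^sub>R F t) \<in> borel_measurable lebesgue"
    using F by (simp add: set_integrable_def)
  have "integrable lebesgue (\<lambda>t. B * \<bar>indicator A t *\<^sub>R F t\<bar>)"
    using F by (intro integrable_mult_right integrable_abs) (simp add: set_integrable_def)
  then show ?thesis unfolding set_integrable_def
  proof (rule Bochner_Integration.integrable_bound)
    show "(\<lambda>t. indicator A t *\<^sub>R (F t * k t)) \<in> borel_measurable lebesgue"
    proof -
      have "(\<lambda>t. (indicator A t *\<^sub>R F t) * k t) \<in> borel_measurable lebesgue"
        by (rule borel_measurable_times[OF Fm km])
      then show ?thesis by (simp add: mult.assoc)
    qed
    show "AE t in lebesgue. norm (indicator A t *\<^sub>R (F t * k t)) \<le> norm (B * \<bar>indicator A t *\<^sub>R F t\<bar>)"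
    proof (intro AE_I2)
      fix t
      have "\<bar>indicator A t * F t\<bar> * \<bar>k t\<bar> \<le> \<bar>indicator A t * F t\<bar> * B"
        using kb[of t] by (intro mult_left_mono) auto
      moreover have "0 \<le> B" using kb[of t] by linarith
      ultimately show "norm (indicator A t *\<^sub>R (F t * k t)) \<le> norm (B * \<bar>indicator A t *\<^sub>R F t\<bar>)"
        by (simp add: abs_mult algebra_simps)
    qed
  qed
qed

lemma plat_abs: "\<bar>plat x y e t\<bar> \<le> 1" using plat_bounds[of x y e t] by auto

lemma ag_int:
  assumes Ha: "H_a L a" and g: "set_integrable lebesgue {0<..<L} g"
  shows "set_integrable lebesgue {0<..<L} (\<lambda>x. a x * g x)"
proof -
  obtain \<alpha> \<beta> where ab: "0 < \<alpha>" "\<alpha> < \<beta>" "AE x in lebesgue. x \<in> {0<..<L} \<longrightarrow> \<alpha> \<le> a x \<and> a x \<le> \<beta>"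
    using Ha by (auto simp: H_a_def)
  have am: "(\<lambda>x. indicator {0<..<L} x *\<^sub>R a x) \<in> borel_measurable lebesgue"
    using Ha by (simp add: H_a_def set_borel_measurable_def)
  have gm: "(\<lambda>x. indicator {0<..<L} x *\<^sub>R g x) \<in> borel_measurable lebesgue"
    using g by (simp add: set_integrable_def)
  have "integrable lebesgue (\<lambda>t. \<beta> * \<bar>indicator {0<..<L} t *\<^sub>R g t\<bar>)"
    using g by (intro integrable_mult_right integrable_abs) (simp add: set_integrable_def)
  then show ?thesis unfolding set_integrable_def
  proof (rule Bochner_Integration.integrable_bound)
    have "(\<lambda>t. (indicator {0<..<L} t *\<^sub>R a t) * (indicator {0<..<L} t *\<^sub>R g t)) \<in> borel_measurable lebesgue"
      by (rule borel_measurable_times[OF am gm])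
    moreover have "(\<lambda>t. (indicator {0<..<L} t *\<^sub>R a t) * (indicator {0<..<L} t *\<^sub>R g t)) =
        (\<lambda>t. indicator {0<..<L} t *\<^sub>R (a t * g t))"
      by (auto simp: indicator_def)
    ultimately show "(\<lambda>t. indicator {0<..<L} t *\<^sub>R (a t * g t)) \<in> borel_measurable lebesgue" by simp
    show "AE t in lebesgue. norm (indicator {0<..<L} t *\<^sub>R (a t * g t)) \<le> norm (\<beta> * \<bar>indicator {0<..<L} t *\<^sub>R g t\<bar>)"
      using ab(3)
    proof eventually_elim
      case (elim t)
      show ?case
      proof (cases "t \<in> {0<..<L}")
        case True
        then have "\<bar>a t\<bar> * \<bar>g t\<bar> \<le> \<beta> * \<bar>g t\<bar>" using elim ab(1) by (intro mult_right_mono) auto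
        then show ?thesis using True ab by (simp add: abs_mult)
      qed simp
    qed
  qed
qed

lemma ode_ae:
  assumes L: "0 < L" and Ha: "H_a L a" and h: "L2_on L h"
    and Phi: "L2_on L Phi" and g: "L2_on L g"
    and ode: "\<And>\<psi>. test_fun L \<psi> \<Longrightarrow>
           (LINT x:{0<..<L}|lebesgue. a x * g x * \<psi> x) =
           (LINT x:{0<..<L}|lebesgue. (Phi x + h x) * \<psi> x)"
  shows "AE t in lebesgue. t \<in> {0<..<L} \<longrightarrow> a t * g t = Phi t + h t"
proof -
  have i1: "set_integrable lebesgue {0<..<L} (\<lambda>x. a x * g x)" using ag_int[OF Ha L2_L1[OF g]] .
  have i2: "set_integrable lebesgue {0<..<L} (\<lambda>x. Phi x + h x)"
    using L2_L1[OF Phi] L2_L1[OF h] by (rule set_integral_add)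
  have "AE t in lebesgue. t \<in> {0<..<L} \<longrightarrow> a t * g t - (Phi t + h t) = 0"
  proof (rule fundamental[OF L])
    show "set_integrable lebesgue {0<..<L} (\<lambda>t. a t * g t - (Phi t + h t))"
      using i1 i2 by (rule set_integral_diff)
    fix x y e :: real assume xy: "0 < x" "x < y" "y < L" "e > 0"
    have j1: "set_integrable lebesgue {0<..<L} (\<lambda>t. a t * g t * plat x y e t)"
      using set_int_mult_bdd[OF i1 plat_meas[OF xy(4)] plat_abs] by simp
    have j2: "set_integrable lebesgue {0<..<L} (\<lambda>t. (Phi t + h t) * plat x y e t)"
      using set_int_mult_bdd[OF i2 plat_meas[OF xy(4)] plat_abs] by simp
    have "(LINT t:{0<..<L}|lebesgue. (a t * g t - (Phi t + h t)) * plat x y e t) =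
          (LINT t:{0<..<L}|lebesgue. a t * g t * plat x y e t - (Phi t + h t) * plat x y e t)"
      by (simp add: algebra_simps)
    also have "\<dots> = (LINT t:{0<..<L}|lebesgue. a t * g t * plat x y e t) -
          (LINT t:{0<..<L}|lebesgue. (Phi t + h t) * plat x y e t)"
      using j1 j2 by (rule set_integral_diff)
    also have "\<dots> = 0" using ode[OF plat_test[OF xy]] by simp
    finally show "(LINT t:{0<..<L}|lebesgue. (a t * g t - (Phi t + h t)) * plat x y e t) = 0" .
  qed
  then show ?thesis by eventually_elim auto
qed




lemma Sd_aff_cont1: "e > 0 \<Longrightarrow> continuous_on A (\<lambda>t. Sd ((t - x) / e))"
  by (intro continuous_intros continuous_on_compose2[OF continuous_at_imp_continuous_on[of UNIV Sd]])
     (auto intro: Sd_cont)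

lemma Sd_aff_cont2: "e > 0 \<Longrightarrow> continuous_on A (\<lambda>t. Sd ((y - t) / e))"
  by (intro continuous_intros continuous_on_compose2[OF continuous_at_imp_continuous_on[of UNIV Sd]])
     (auto intro: Sd_cont)

lemma plat_deriv_cont: "e > 0 \<Longrightarrow> continuous_on A (deriv (plat x y e))"
proof -
  assume e: "e > 0"
  have "continuous_on A (\<lambda>t. Sd ((t - x) / e) / e * S ((y - t) / e) - S ((t - x) / e) * Sd ((y - t) / e) / e)"
    by (intro continuous_intros S_cont_on) (use e Sd_aff_cont1 Sd_aff_cont2 in auto)
  moreover have "deriv (plat x y e) = (\<lambda>t. Sd ((t - x) / e) / e * S ((y - t) / e) - S ((t - x) / e) * Sd ((y - t) / e) / e)"
    using plat_deriv[OF e] by auto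
  ultimately show ?thesis by simp
qed

lemma plat_deriv_zero: "e > 0 \<Longrightarrow> t \<notin> {x..y} \<Longrightarrow> deriv (plat x y e) t = 0"
proof -
  assume e: "e > 0" and t: "t \<notin> {x..y}"
  then have "t < x \<or> t > y" by auto
  then show ?thesis
  proof
    assume "t < x"
    then have "(t - x) / e \<le> 0" using e by (simp add: divide_nonpos_pos)
    then show ?thesis using e by (simp add: plat_deriv S_0 Sd_zero)
  next
    assume "t > y"
    then have "(y - t) / e \<le> 0" using e by (simp add: divide_nonpos_pos)
    then show ?thesis using e by (simp add: plat_deriv S_0 Sd_zero)
  qed
qed

lemma weak_FTC:
  fixes v g :: "real \<Rightarrow> real"
  assumes L: "0 < L" and vc: "continuous_on {0..L} v" and gi: "set_integrable lebesgue {0<..<L} g"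
    and wd: "\<And>\<psi>. test_fun L \<psi> \<Longrightarrow>
       (LINT t:{0<..<L}|lebesgue. v t * deriv \<psi> t) = - (LINT t:{0<..<L}|lebesgue. g t * \<psi> t)"
    and xy: "0 < x" "x < y" "y < L"
  shows "v y - v x = (LINT t:{x<..<y}|lebesgue. g t)"
proof -
  define e where "e n = (y - x) / (real n + 3)" for n
  have epos: "e n > 0" for n using xy by (simp add: e_def)
  have e3: "3 * e n \<le> y - x" for n
  proof -
    have "x * real n \<le> y * real n" using xy by (intro mult_right_mono) auto
    then show ?thesis using xy by (simp add: e_def field_simps)
  qed
  have e0: "e \<longlonglongrightarrow> 0"
  proof -
    have "filterlim (\<lambda>n. real n + 3) at_top sequentially"
      by (subst add.commute, rule filterlim_tendsto_add_at_top[OF tendsto_const filterlim_real_sequentially])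
    then show ?thesis unfolding e_def by (intro tendsto_divide_0[OF tendsto_const] filterlim_at_top_imp_at_infinity)
  qed
  define \<psi> where "\<psi> n = plat x y (e n)" for n
  have test: "test_fun L (\<psi> n)" for n unfolding \<psi>_def by (rule plat_test) (use xy epos in auto)
  define G where "G t = indicator {0<..<L} t * g t" for t
  have Gint: "integrable lebesgue G" using gi by (simp add: G_def[abs_def] set_integrable_def)
  have Gm: "G \<in> borel_measurable lebesgue" using Gint by auto
  have R: "(\<lambda>n. LINT t:{0<..<L}|lebesgue. g t * \<psi> n t) \<longlonglongrightarrow> (LINT t:{x<..<y}|lebesgue. g t)"
  proof -
    have conv: "(\<lambda>n. LINT t|lebesgue. \<psi> n t * G t) \<longlonglongrightarrow> (LINT t|lebesgue. indicator {x<..<y} t * G t)"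
    proof (rule integral_dominated_convergence[where w="\<lambda>t. norm (G t)"])
      show "(\<lambda>t. indicator {x<..<y} t * G t) \<in> borel_measurable lebesgue"
        by (rule borel_measurable_times[OF borel_measurable_indicator Gm]) (intro sets_completionI_sets, simp)
      show "(\<lambda>t. \<psi> n t * G t) \<in> borel_measurable lebesgue" for n
        unfolding \<psi>_def by (rule borel_measurable_times[OF plat_meas[OF epos] Gm])
      show "integrable lebesgue (\<lambda>t. norm (G t))" using Gint by auto
      show "AE t in lebesgue. norm (\<psi> n t * G t) \<le> norm (G t)" for n
        using plat_bounds by (auto simp: \<psi>_def abs_mult intro!: mult_left_le_one_le)
      show "AE t in lebesgue. (\<lambda>n. \<psi> n t * G t) \<longlonglongrightarrow> indicator {x<..<y} t * G t"
      proof (intro AE_I2)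
        fix t
        show "(\<lambda>n. \<psi> n t * G t) \<longlonglongrightarrow> indicator {x<..<y} t * G t"
        proof (cases "t \<in> {x<..<y}")
          case True
          define m where "m = min (t - x) (y - t)"
          have "m > 0" using True by (auto simp: m_def)
          then have "\<forall>\<^sub>F n in sequentially. e n < m" using order_tendstoD(2)[OF e0, of m] by auto
          then have "\<forall>\<^sub>F n in sequentially. \<psi> n t * G t = indicator {x<..<y} t * G t"
          proof (rule eventually_mono)
            fix n assume "e n < m"
            then have "\<psi> n t = 1" unfolding \<psi>_def by (intro plat_one epos) (auto simp: m_def)
            then show "\<psi> n t * G t = indicator {x<..<y} t * G t" using True by simp
          qed
          then show ?thesis by (rule tendsto_eventually)
        next
          case False
          then have "t \<le> x \<or> t \<ge> y" by auto
          then have "\<psi> n t = 0" for n unfolding \<psi>_def by (rule plat_zero[OF epos])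
          then show ?thesis using False by simp
        qed
      qed
    qed
    have e1: "(LINT t:{0<..<L}|lebesgue. g t * \<psi> n t) = (LINT t|lebesgue. \<psi> n t * G t)" for n
      unfolding set_lebesgue_integral_def G_def by (intro Bochner_Integration.integral_cong) auto
    have e2: "(LINT t:{x<..<y}|lebesgue. g t) = (LINT t|lebesgue. indicator {x<..<y} t * G t)"
      unfolding set_lebesgue_integral_def G_def
      by (intro Bochner_Integration.integral_cong) (use xy in \<open>auto simp: indicator_def\<close>)
    show ?thesis unfolding e1 e2 by (rule conv)
  qed
  have vxy: "continuous_on {x..y} v" by (rule continuous_on_subset[OF vc]) (use xy in auto)
  have eq: "(LINT t:{0<..<L}|lebesgue. v t * deriv (\<psi> n) t) =
     integral {x..x + e n} (\<lambda>t. v t * (Sd ((t - x) / e n) / e n)) -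
     integral {y - e n..y} (\<lambda>t. v t * (Sd ((y - t) / e n) / e n))" for n
  proof -
    let ?f = "\<lambda>t. v t * deriv (\<psi> n) t"
    have hi: "(?f has_integral (integral {x..x + e n} (\<lambda>t. v t * (Sd ((t - x) / e n) / e n)) -
     integral {y - e n..y} (\<lambda>t. v t * (Sd ((y - t) / e n) / e n)))) {x..y}"
      unfolding \<psi>_def by (rule plat_lhs_hasint[OF vxy epos]) (use e3[of n] epos[of n] in auto)
    have ai: "?f absolutely_integrable_on {x..y}"
      unfolding \<psi>_def by (intro absolutely_integrable_continuous_real continuous_intros vxy plat_deriv_cont epos)
    have "(LINT t:{0<..<L}|lebesgue. ?f t) = (LINT t:{x..y}|lebesgue. ?f t)"
      unfolding set_lebesgue_integral_def
      by (intro Bochner_Integration.integral_cong)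
         (use xy plat_deriv_zero[OF epos] in \<open>auto simp: indicator_def \<psi>_def\<close>)
    also have "\<dots> = integral {x..y} ?f" using ai by (rule set_lebesgue_integral_eq_integral(2))
    also have "\<dots> = integral {x..x + e n} (\<lambda>t. v t * (Sd ((t - x) / e n) / e n)) -
     integral {y - e n..y} (\<lambda>t. v t * (Sd ((y - t) / e n) / e n))" using hi by (rule integral_unique)
    finally show ?thesis .
  qed
  have Lh: "(\<lambda>n. LINT t:{0<..<L}|lebesgue. v t * deriv (\<psi> n) t) \<longlonglongrightarrow> v x - v y"
  proof (rule LIMSEQ_I)
    fix r :: real assume r: "r > 0"
    have cx: "\<exists>d>0. \<forall>t\<in>{0..L}. dist t x < d \<longrightarrow> dist (v t) (v x) < r / 3"
    proof -
      have "x \<in> {0..L}" "r / 3 > 0" using xy r by auto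
      then show ?thesis using vc unfolding continuous_on_iff by blast
    qed
    have cy: "\<exists>d>0. \<forall>t\<in>{0..L}. dist t y < d \<longrightarrow> dist (v t) (v y) < r / 3"
    proof -
      have "y \<in> {0..L}" "r / 3 > 0" using xy r by auto
      then show ?thesis using vc unfolding continuous_on_iff by blast
    qed
    obtain d1 where d1: "d1 > 0" "\<forall>t\<in>{0..L}. dist t x < d1 \<longrightarrow> dist (v t) (v x) < r / 3" using cx by auto
    obtain d2 where d2: "d2 > 0" "\<forall>t\<in>{0..L}. dist t y < d2 \<longrightarrow> dist (v t) (v y) < r / 3" using cy by auto
    have "\<forall>\<^sub>F n in sequentially. e n < min d1 d2" using order_tendstoD(2)[OF e0, of "min d1 d2"] d1 d2 by auto
    then obtain no where no: "\<And>n. n \<ge> no \<Longrightarrow> e n < min d1 d2" by (auto simp: eventually_sequentially)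
    show "\<exists>no. \<forall>n\<ge>no. norm ((LINT t:{0<..<L}|lebesgue. v t * deriv (\<psi> n) t) - (v x - v y)) < r"
    proof (intro exI allI impI)
      fix n assume n: "n \<ge> no"
      have en: "e n < d1" "e n < d2" using no[OF n] by auto
      have I1: "\<bar>integral {x..x + e n} (\<lambda>t. v t * (Sd ((t - x) / e n) / e n)) - v x\<bar> \<le> r / 3"
      proof (rule bump_est)
        show "continuous_on {x..x + e n} v" by (rule continuous_on_subset[OF vc]) (use xy e3[of n] epos[of n] in auto)
        show "continuous_on {x..x + e n} (\<lambda>t. Sd ((t - x) / e n) / e n)" by (rule k1_cont[OF epos])
        show "((\<lambda>t. Sd ((t - x) / e n) / e n) has_integral 1) {x..x + e n}" by (rule k1_int[OF epos])
        fix t assume t: "t \<in> {x..x + e n}"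
        then have "t \<in> {0..L}" "dist t x < d1" using xy e3[of n] epos[of n] en by (auto simp: dist_real_def)
        then show "\<bar>v t - v x\<bar> \<le> r / 3" using d1(2) by (auto simp: dist_real_def)
      qed (use epos Sd_nonneg divide_nonneg_pos in auto)
      have I2: "\<bar>integral {y - e n..y} (\<lambda>t. v t * (Sd ((y - t) / e n) / e n)) - v y\<bar> \<le> r / 3"
      proof (rule bump_est)
        show "continuous_on {y - e n..y} v" by (rule continuous_on_subset[OF vc]) (use xy e3[of n] epos[of n] in auto)
        show "continuous_on {y - e n..y} (\<lambda>t. Sd ((y - t) / e n) / e n)" by (rule k2_cont[OF epos])
        show "((\<lambda>t. Sd ((y - t) / e n) / e n) has_integral 1) {y - e n..y}" by (rule k2_int[OF epos])
        fix t assume t: "t \<in> {y - e n..y}"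
        then have "t \<in> {0..L}" "dist t y < d2" using xy e3[of n] epos[of n] en by (auto simp: dist_real_def)
        then show "\<bar>v t - v y\<bar> \<le> r / 3" using d2(2) by (auto simp: dist_real_def)
      qed (use epos Sd_nonneg divide_nonneg_pos in auto)
      show "norm ((LINT t:{0<..<L}|lebesgue. v t * deriv (\<psi> n) t) - (v x - v y)) < r"
        using I1 I2 r unfolding eq real_norm_def abs_le_iff abs_less_iff by linarith
    qed
  qed
  have "(\<lambda>n. LINT t:{0<..<L}|lebesgue. v t * deriv (\<psi> n) t) = (\<lambda>n. - (LINT t:{0<..<L}|lebesgue. g t * \<psi> n t))"
    using wd test by simp
  then have "(\<lambda>n. - (LINT t:{0<..<L}|lebesgue. g t * \<psi> n t)) \<longlonglongrightarrow> v x - v y" using Lh by simp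
  moreover have "(\<lambda>n. - (LINT t:{0<..<L}|lebesgue. g t * \<psi> n t)) \<longlonglongrightarrow> - (LINT t:{x<..<y}|lebesgue. g t)"
    using R by (rule tendsto_minus)
  ultimately have "v x - v y = - (LINT t:{x<..<y}|lebesgue. g t)" using LIMSEQ_unique by blast
  then show ?thesis by simp
qed




lemma pos_integral:
  fixes g :: "real \<Rightarrow> real"
  assumes gi: "set_integrable lebesgue {s<..<t} g" and st: "s < t"
    and pos: "AE r in lebesgue. r \<in> {s<..<t} \<longrightarrow> g r > 0"
  shows "(LINT r:{s<..<t}|lebesgue. g r) > 0"
proof -
  define G where "G r = indicator {s<..<t} r * g r" for r
  have Gint: "integrable lebesgue G" using gi by (simp add: set_integrable_def G_def[abs_def])
  have Sl: "{s<..<t} \<in> sets lebesgue" by simp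
  have nn: "(LINT r:{s<..<t}|lebesgue. g r) \<ge> 0"
    unfolding set_lebesgue_integral_def
    by (rule integral_nonneg_AE) (use pos in \<open>eventually_elim, auto simp: indicator_def\<close>)
  have "(LINT r:{s<..<t}|lebesgue. g r) \<noteq> 0"
  proof
    assume z: "(LINT r:{s<..<t}|lebesgue. g r) = 0"
    have "(LINT r:{s<..<t}|lebesgue. G r) = (LINT r:{s<..<t}|lebesgue. g r)"
      unfolding set_lebesgue_integral_def G_def
      by (intro Bochner_Integration.integral_cong) (auto simp: indicator_def)
    then have "{s<..<t} \<in> null_sets lebesgue"
      using z pos by (intro null_if_pos_func_has_zero_int[OF Gint Sl])
         (auto simp: G_def elim!: eventually_mono)
    then have "emeasure lebesgue {s<..<t} = 0" by auto
    moreover have "emeasure lebesgue {s<..<t} = ennreal (t - s)"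
      using st by (simp add: emeasure_completion)
    ultimately show False using st by simp
  qed
  then show ?thesis using nn by simp
qed

theorem mainTheorem12:
  fixes L :: real and a h v :: "real \<Rightarrow> real" and \<phi> :: "real \<Rightarrow> ereal"
  assumes "L > 0"
    and "H_a L a"
    and "L2_on L h"
    and "H_phi \<phi>" and "H_int \<phi>" and "H_bdd \<phi>"
    and "\<phi> 0 = \<infinity>"
    and "\<forall>\<eta>. 0 < \<eta> \<and> \<eta> < L \<longrightarrow>
           (\<exists>M>0. AE x in lebesgue. x \<in> {0..L-\<eta>} \<longrightarrow> h x \<ge> - M)"
    and "solves_C L a h \<phi> v"
  shows "\<forall>x\<in>{0<..<L}. v x > 0"
proof -
  note L = assms(1)
  define Phi where "Phi x = real_of_ereal (\<phi> (v x))" for x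
  from assms(9) obtain g where
      vc: "continuous_on {0..L} v" and v0: "v 0 = 0"
      and fin: "AE x in lebesgue. x \<in> {0<..<L} \<longrightarrow> \<phi> (v x) \<noteq> \<infinity>"
      and PhiL2: "L2_on L Phi"
      and gL2: "L2_on L g" and wdg: "is_weak_deriv L v g"
      and ode: "\<And>\<psi>. test_fun L \<psi> \<Longrightarrow>
           (LINT x:{0<..<L}|lebesgue. a x * g x * \<psi> x) =
           (LINT x:{0<..<L}|lebesgue. (Phi x + h x) * \<psi> x)"
    unfolding solves_C_def Phi_def by blast
  have gi: "set_integrable lebesgue {0<..<L} g" by (rule L2_L1[OF gL2])
  have wd: "\<And>\<psi>. test_fun L \<psi> \<Longrightarrow>
       (LINT t:{0<..<L}|lebesgue. v t * deriv \<psi> t) = - (LINT t:{0<..<L}|lebesgue. g t * \<psi> t)"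
    using wdg by (simp add: is_weak_deriv_def)
  have ae: "AE t in lebesgue. t \<in> {0<..<L} \<longrightarrow> a t * g t = Phi t + h t"
    by (rule ode_ae[OF L assms(2) assms(3) PhiL2 gL2 ode])
  obtain \<alpha> \<beta> where ab: "0 < \<alpha>" "\<alpha> < \<beta>" "AE x in lebesgue. x \<in> {0<..<L} \<longrightarrow> \<alpha> \<le> a x \<and> a x \<le> \<beta>"
    using assms(2) by (auto simp: H_a_def)
  have phinm: "\<phi> s \<noteq> -\<infinity>" for s using assms(4) by (simp add: H_phi_def)
  have phic: "isCont \<phi> 0"
    using assms(4) by (simp add: H_phi_def continuous_on_eq_continuous_at)
  show ?thesis
  proof (rule ccontr)
    assume "\<not> ?thesis"
    then obtain x1 where x1: "0 < x1" "x1 < L" "v x1 \<le> 0" by auto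
    define \<eta> where "\<eta> = (L - x1) / 2"
    have eta: "0 < \<eta>" "\<eta> < L" "x1 < L - \<eta>" using x1 by (auto simp: \<eta>_def field_simps)
    obtain M where M: "M > 0" "AE x in lebesgue. x \<in> {0..L-\<eta>} \<longrightarrow> h x \<ge> - M"
      using assms(8) eta by blast
    have "(\<phi> \<longlongrightarrow> \<infinity>) (at 0)" using phic assms(7) by (simp add: isCont_def)
    then have "\<forall>\<^sub>F s in at 0. \<phi> s > ereal (M + 1)" by (rule order_tendstoD(1)) simp
    then obtain d where d: "d > 0" "\<And>s. s \<noteq> 0 \<Longrightarrow> dist s 0 < d \<Longrightarrow> \<phi> s > ereal (M + 1)"
      unfolding eventually_at by blast
    have phibig: "\<And>s. \<bar>s\<bar> < d \<Longrightarrow> \<phi> s > ereal (M + 1)"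
    proof -
      fix s :: real assume "\<bar>s\<bar> < d"
      show "\<phi> s > ereal (M + 1)"
      proof (cases "s = 0")
        case True then show ?thesis using assms(7) by simp
      next
        case False then show ?thesis using d \<open>\<bar>s\<bar> < d\<close> by (simp add: dist_real_def)
      qed
    qed
    have gpos: "AE t in lebesgue. t \<in> {0<..<L} \<and> t \<le> x1 \<and> \<bar>v t\<bar> < d \<longrightarrow> g t > 0"
      using ae ab(3) M(2) fin
    proof eventually_elim
      case (elim t)
      show ?case
      proof (intro impI)
        assume t: "t \<in> {0<..<L} \<and> t \<le> x1 \<and> \<bar>v t\<bar> < d"
        then have t0: "t \<in> {0..L-\<eta>}" using eta by auto
        have big: "\<phi> (v t) > ereal (M + 1)" using phibig t by auto
        have "\<phi> (v t) \<noteq> \<infinity>" using elim t by auto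
        then obtain r where r: "\<phi> (v t) = ereal r" using phinm[of "v t"] by (cases "\<phi> (v t)") auto
        then have "Phi t > M + 1" using big by (simp add: Phi_def)
        moreover have "h t \<ge> - M" using elim t0 by auto
        ultimately have "a t * g t > 0" using elim t by auto
        moreover have "a t > 0" using elim t ab(1) by auto
        ultimately show "g t > 0" by (simp add: zero_less_mult_iff)
      qed
    qed
    have INC: "v s < v t" if st: "0 < s" "s < t" "t \<le> x1" and sm: "\<forall>r\<in>{s..t}. \<bar>v r\<bar> < d" for s t
    proof -
      have "v t - v s = (LINT r:{s<..<t}|lebesgue. g r)"
        by (rule weak_FTC[OF L vc gi wd]) (use st x1 in auto)
      moreover have "(LINT r:{s<..<t}|lebesgue. g r) > 0"
      proof (rule pos_integral)
        show "set_integrable lebesgue {s<..<t} g"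
          by (rule set_integrable_subset[OF gi]) (use st x1 in auto)
        show "s < t" by (rule st)
        show "AE r in lebesgue. r \<in> {s<..<t} \<longrightarrow> 0 < g r"
          using gpos by eventually_elim (use st x1 sm in auto)
      qed
      ultimately show ?thesis by simp
    qed
    have c_at: "\<forall>x\<in>{0..L}. \<forall>e>0. \<exists>dd>0. \<forall>x'\<in>{0..L}. dist x' x < dd \<longrightarrow> dist (v x') (v x) < e"
      using vc unfolding continuous_on_iff by blast
    obtain \<rho>0 where r0: "\<rho>0 > 0" "\<forall>x'\<in>{0..L}. dist x' 0 < \<rho>0 \<longrightarrow> dist (v x') (v 0) < d"
      using c_at d(1) L by fastforce
    define \<rho> where "\<rho> = min (\<rho>0 / 2) x1"
    have rho: "0 < \<rho>" "\<rho> \<le> x1" using r0 x1 by (auto simp: \<rho>_def)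
    have small0: "\<bar>v r\<bar> < d" if "0 \<le> r" "r \<le> \<rho>" for r
      using r0(2)[rule_format, of r] that rho x1 v0 by (auto simp: dist_real_def \<rho>_def)
    have pos: "v r > 0" if r: "0 < r" "r \<le> \<rho>" for r
    proof -
      have A: "v (r/2) < v r" by (rule INC) (use r rho small0 in auto)
      have "v (r/2) \<ge> 0"
      proof (rule ccontr)
        assume neg: "\<not> v (r/2) \<ge> 0"
        obtain \<sigma> where \<sigma>: "\<sigma> > 0" "\<forall>x'\<in>{0..L}. dist x' 0 < \<sigma> \<longrightarrow> dist (v x') (v 0) < - v (r/2)"
        proof -
          have "(0::real) \<in> {0..L}" "- v (r/2) > 0" using neg L by auto
          then show ?thesis using c_at that v0 by blast
        qed
        define s where "s = min (\<sigma>/2) (r/4)"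
        have s: "0 < s" "s < r/2" using \<sigma> r by (auto simp: s_def)
        have "v s < v (r/2)" by (rule INC) (use s r rho small0 in auto)
        moreover have "\<bar>v s\<bar> < - v (r/2)"
          using \<sigma>(2)[rule_format, of s] s \<sigma>(1) v0 r rho x1 by (auto simp: dist_real_def s_def)
        ultimately show False by linarith
      qed
      then show ?thesis using A by linarith
    qed
    show False
    proof (cases "x1 \<le> \<rho>")
      case True then show False using pos[of x1] x1 by auto
    next
      case False
      then have rx: "\<rho> < x1" by simp
      have vr: "v \<rho> > 0" using pos rho by auto
      have vcr: "continuous_on {\<rho>..x1} v" by (rule continuous_on_subset[OF vc]) (use rho x1 in auto)
      define Z where "Z = {r \<in> {\<rho>..x1}. v r = 0}"
      obtain z where z: "\<rho> \<le> z" "z \<le> x1" "v z = 0" using IVT2'[of v x1 0 \<rho>] x1 vr rx vcr by auto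
      have Zne: "Z \<noteq> {}" using z by (auto simp: Z_def)
      have Zcl: "closed Z" unfolding Z_def by (rule continuous_closed_preimage_constant[OF vcr]) simp
      have Zbd: "bdd_below Z" by (auto simp: Z_def bdd_below_def)
      define p where "p = Inf Z"
      have pZ: "p \<in> Z" unfolding p_def by (rule closed_contains_Inf[OF Zne Zbd Zcl])
      have pl: "p \<le> r" if "r \<in> Z" for r unfolding p_def using that Zbd by (rule cInf_lower)
      have p: "\<rho> \<le> p" "p \<le> x1" "v p = 0" using pZ by (auto simp: Z_def)
      have prho: "\<rho> < p" using p vr by (cases "\<rho> = p") auto
      have before: "v r > 0" if rr: "\<rho> \<le> r" "r < p" for r
      proof (rule ccontr)
        assume "\<not> v r > 0"
        then obtain z' where z': "\<rho> \<le> z'" "z' \<le> r" "v z' = 0"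
          using IVT2'[of v r 0 \<rho>] vr rr continuous_on_subset[OF vcr, of "{\<rho>..r}"] p by auto
        then have "z' \<in> Z" using rr p by (auto simp: Z_def)
        then show False using pl z' rr by fastforce
      qed
      obtain \<sigma> where \<sigma>: "\<sigma> > 0" "\<forall>x'\<in>{0..L}. dist x' p < \<sigma> \<longrightarrow> dist (v x') (v p) < d"
      proof -
        have "p \<in> {0..L}" using p rho x1 by auto
        then show ?thesis using c_at d(1) that by blast
      qed
      define q where "q = max \<rho> (p - \<sigma>/2)"
      have q: "\<rho> \<le> q" "q < p" using prho \<sigma> by (auto simp: q_def)
      have "v q < v p"
      proof (rule INC)
        show "0 < q" "q < p" "p \<le> x1" using q rho p by auto
        show "\<forall>r\<in>{q..p}. \<bar>v r\<bar> < d"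
        proof
          fix r assume r: "r \<in> {q..p}"
          then have "r \<in> {0..L}" "dist r p < \<sigma>" using q rho p x1 \<sigma> by (auto simp: dist_real_def q_def)
          then show "\<bar>v r\<bar> < d" using \<sigma>(2) p by (auto simp: dist_real_def)
        qed
      qed
      moreover have "v q > 0" using before q by auto
      ultimately show False using p by simp
    qed
  qed
qed


end
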